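(* Let $\hat q,\hat p$ be $n\times n$ parametric matrices and let $M$ be an invertible $n\times n$ $(\hat q,\hat p)$-Manin matrix over $\mathfrak R$. Let $1\le m\le n$, let $I=(i_1<\dots<i_m)$ be an increasing multi-index and $J=(j_1,\dots,j_m)$ a multi-index with distinct entries, both with entries in $\{1,\dots,n\}$. Then $$\sum_K\varepsilon(\hat p,K^{\tau})\,\mathrm{cdet}_{\hat q}(M_{IK})\,\mathrm{cdet}_{\hat p'}((M^{-1})_{KJ})=\varepsilon(\hat q,J^{\tau})\,\delta_{I,J^{or}},$$ where the sum is over all increasing multi-indices $K=(k_1<\dots<k_m)$ with entries in $\{1,\dots,n\}$, and $\hat p'=(p'_{ij})$ with $p'_{ij}=p_{ij}^{-1}$. In particular, for $m=n$, $$\mathrm{cdet}_{\hat q}(M)\,\mathrm{cdet}_{\hat p'}(M^{-1})=\varepsilon(\hat p,\tau)^{-1}\varepsilon(\hat q,\tau),$$ where $\tau=(n,n-1,\dots,1)$.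
   Context: $\mathfrak R$ is an associative unital algebra over $\mathbb C$. A parametric $n\times n$ matrix is a matrix $\hat q=(q_{ij})$ of nonzero complex numbers with $q_{ij}q_{ji}=1$, $q_{ii}=1$. An $n\times n$ matrix $M$ over $\mathfrak R$ is a $(\hat q,\hat p)$-Manin matrix if $M_{ik}M_{jk}=q_{ji}M_{jk}M_{ik}$ for $i<j$ and all $k$, and $M_{ik}M_{jl}-q_{ji}p_{kl}M_{jl}M_{ik}+p_{kl}M_{il}M_{jk}-q_{ji}M_{jk}M_{il}=0$ for $i<j$, $k<l$. For a multi-index $I=(i_1,\dots,i_r)$: $I^{\tau}=(i_r,\dots,i_1)$ is its reverse; $I^{or}$ is its nondecreasing rearrangement; $\varepsilon(\hat q,I)=0$ if two entries coincide, otherwise $\varepsilon(\hat q,I)=\prod_{s<t,\ i_s>i_t}(-q_{i_si_t})$. For increasing $I=(i_1<\dots<i_r)$ and $\sigma\in S_r$, $\varepsilon(\hat q,I,\sigma)=\prod_{s<t,\ \sigma(s)>\sigma(t)}(-q_{i_{\sigma(s)}i_{\sigma(t)}})$. For any matrix $X$, increasing $I$ and any multi-index $J=(j_1,\dots,j_r)$, $\mathrm{cdet}_{\hat q}(X_{IJ})=\sum_{\sigma\in S_r}\varepsilon(\hat q,I,\sigma)X_{i_{\sigma(1)},j_1}\cdots X_{i_{\sigma(r)},j_r}$ (same formula with any parametric matrix in place of $\hat q$); $\mathrm{cdet}_{\hat q}(X)$ is the case $I=J=(1,\dots,n)$. $\delta_{I,J^{or}}$ is $1$ if $I=J^{or}$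 and $0$ otherwise. *)

theory Defs
  imports Complex_Main "HOL-Combinatorics.Permutations"
begin

(* An associative unital C-algebra R is modelled as a ring 'a :: ring_1 together with
   the structure map phi : C -> R, a unital ring homomorphism with central image. *)
definition calg :: "(complex \<Rightarrow> 'a::ring_1) \<Rightarrow> bool" where
  "calg phi \<longleftrightarrow> phi 1 = 1 \<and> (\<forall>a b. phi (a + b) = phi a + phi b)
     \<and> (\<forall>a b. phi (a * b) = phi a * phi b) \<and> (\<forall>a x. phi a * x = x * phi a)"

(* n x n matrices are functions indexed by {1..n} x {1..n} *)
definition param_matrix :: "nat \<Rightarrow> (nat \<Rightarrow> nat \<Rightarrow> complex) \<Rightarrow> bool" where
  "param_matrix n q \<longleftrightarrow> (\<forall>i\<in>{1..n}. \<forall>j\<in>{1..n}. q i j \<noteq> 0 \<and> q i j * q j i = 1) \<and>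
     (\<forall>i\<in>{1..n}. q i i = 1)"

definition manin :: "(complex \<Rightarrow> 'a::ring_1) \<Rightarrow> nat \<Rightarrow> (nat \<Rightarrow> nat \<Rightarrow> complex) \<Rightarrow>
    (nat \<Rightarrow> nat \<Rightarrow> complex) \<Rightarrow> (nat \<Rightarrow> nat \<Rightarrow> 'a) \<Rightarrow> bool" where
  "manin phi n q p M \<longleftrightarrow>
     (\<forall>i\<in>{1..n}. \<forall>j\<in>{1..n}. \<forall>k\<in>{1..n}. i < j \<longrightarrow>
        M i k * M j k = phi (q j i) * M j k * M i k) \<and>
     (\<forall>i\<in>{1..n}. \<forall>j\<in>{1..n}. \<forall>k\<in>{1..n}. \<forall>l\<in>{1..n}. i < j \<longrightarrow> k < l \<longrightarrow>
        M i k * M j l - phi (q j i * p k l) * M j l * M i k + phi (p k l) * M i l * M j k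
          - phi (q j i) * M j k * M i l = 0)"

definition matmul :: "nat \<Rightarrow> (nat \<Rightarrow> nat \<Rightarrow> 'a::ring_1) \<Rightarrow> (nat \<Rightarrow> nat \<Rightarrow> 'a) \<Rightarrow> nat \<Rightarrow> nat \<Rightarrow> 'a" where
  "matmul n A B i j = (\<Sum>k=1..n. A i k * B k j)"

definition is_inverse :: "nat \<Rightarrow> (nat \<Rightarrow> nat \<Rightarrow> 'a::ring_1) \<Rightarrow> (nat \<Rightarrow> nat \<Rightarrow> 'a) \<Rightarrow> bool" where
  "is_inverse n M N \<longleftrightarrow> (\<forall>i\<in>{1..n}. \<forall>j\<in>{1..n}.
      matmul n M N i j = (if i = j then 1 else 0) \<and> matmul n N M i j = (if i = j then 1 else 0))"

(* multi-indices are lists; positions are 0-based *)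
definition eps :: "(nat \<Rightarrow> nat \<Rightarrow> complex) \<Rightarrow> nat list \<Rightarrow> complex" where
  "eps q I = (if distinct I then
      (\<Prod>(s,t)\<in>{(s,t). s < t \<and> t < length I \<and> I!s > I!t}. - q (I!s) (I!t)) else 0)"

definition eps_perm :: "(nat \<Rightarrow> nat \<Rightarrow> complex) \<Rightarrow> nat list \<Rightarrow> (nat \<Rightarrow> nat) \<Rightarrow> complex" where
  "eps_perm q I \<sigma> =
      (\<Prod>(s,t)\<in>{(s,t). s < t \<and> t < length I \<and> \<sigma> s > \<sigma> t}. - q (I!(\<sigma> s)) (I!(\<sigma> t)))"

(* column determinant cdet_q(X_{IJ}) for increasing I, length J = length I *)
definition cdet :: "(complex \<Rightarrow> 'a::ring_1) \<Rightarrow> (nat \<Rightarrow> nat \<Rightarrow> complex) \<Rightarrow> (nat \<Rightarrow> nat \<Rightarrow> 'a) \<Rightarrow>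
    nat list \<Rightarrow> nat list \<Rightarrow> 'a" where
  "cdet phi q X I J = (\<Sum>\<sigma> | \<sigma> permutes {0..<length I}.
      phi (eps_perm q I \<sigma>) * prod_list (map (\<lambda>s. X (I!(\<sigma> s)) (J!s)) [0..<length I]))"

end

theory Submission
  imports Defs
begin


lemma calg_0: "calg phi \<Longrightarrow> phi 0 = 0"
proof -
  assume c: "calg phi"
  have "phi (0+0) = phi 0 + phi 0" using c unfolding calg_def by blast
  thus ?thesis by simp
qed

lemma calg_uminus: "calg phi \<Longrightarrow> phi (- a) = - phi a"
proof -
  assume c: "calg phi"
  have "phi (-a + a) = phi (-a) + phi a" using c unfolding calg_def by blast
  hence "phi (-a) + phi a = 0" using calg_0[OF c] by simp
  thus ?thesis by (simp add: eq_neg_iff_add_eq_0)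
qed

lemma calg_mult: "calg phi \<Longrightarrow> phi (a * b) = phi a * phi b"
  unfolding calg_def by blast
lemma calg_add: "calg phi \<Longrightarrow> phi (a + b) = phi a + phi b"
  unfolding calg_def by blast
lemma calg_1: "calg phi \<Longrightarrow> phi 1 = 1"
  unfolding calg_def by blast
lemma calg_comm: "calg phi \<Longrightarrow> phi a * x = x * phi a"
  unfolding calg_def by blast
lemma calg_diff: "calg phi \<Longrightarrow> phi (a - b) = phi a - phi b"
  using calg_add[of phi a "-b"] calg_uminus[of phi b] by simp

definition swp :: "'b list \<Rightarrow> nat \<Rightarrow> 'b list" where
  "swp L t = L[t := L ! Suc t, Suc t := L ! t]"

definition invs :: "nat list \<Rightarrow> (nat \<times> nat) set" where
  "invs L = {(s,t). s < t \<and> t < length L \<and> L!s > L!t}"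

definition hh :: "nat \<Rightarrow> nat \<Rightarrow> nat" where
  "hh t a = (if a = t then Suc t else if a = Suc t then t else a)"

lemma length_swp[simp]: "length (swp L t) = length L"
  by (simp add: swp_def)

lemma swp_nth: "Suc t < length L \<Longrightarrow> x < length L \<Longrightarrow> swp L t ! x = L ! (hh t x)"
  by (auto simp: swp_def hh_def nth_list_update)

lemma swp_swp: "Suc t < length L \<Longrightarrow> swp (swp L t) t = L"
  by (rule nth_equalityI) (simp_all add: swp_def nth_list_update)

lemma mset_swp: "Suc t < length L \<Longrightarrow> mset (swp L t) = mset L"
  unfolding swp_def by (rule mset_swap) auto

lemma set_swp: "Suc t < length L \<Longrightarrow> set (swp L t) = set L"
  using mset_eq_setD[OF mset_swp] by blast

lemma distinct_swp: "Suc t < length L \<Longrightarrow> distinct (swp L t) = distinct L"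
  using mset_eq_imp_distinct_iff[OF mset_swp] by blast

lemma finite_invs: "finite (invs L)"
  by (rule finite_subset[of _ "{..<length L} \<times> {..<length L}"]) (auto simp: invs_def)

lemma hhh[simp]: "hh t (hh t a) = a" by (auto simp: hh_def)

lemma mem_g_image: "((a,b) \<in> (\<lambda>(a,b). (hh t a, hh t b)) ` X) = ((hh t a, hh t b) \<in> X)"
proof
  assume "(a,b) \<in> (\<lambda>(a,b). (hh t a, hh t b)) ` X"
  then obtain c d where "(c,d) \<in> X" "a = hh t c" "b = hh t d" by auto
  thus "(hh t a, hh t b) \<in> X" by simp
next
  assume "(hh t a, hh t b) \<in> X"
  thus "(a,b) \<in> (\<lambda>(a,b). (hh t a, hh t b)) ` X"
    by (intro image_eqI[where x="(hh t a, hh t b)"]) simp_all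
qed

lemma hh_lt_len: "Suc t < n \<Longrightarrow> (hh t a < n) = (a < n)"
  by (auto simp: hh_def)

lemma hh_order: "\<not>(a=t\<and>b=Suc t) \<Longrightarrow> \<not>(a=Suc t\<and>b=t) \<Longrightarrow> (hh t a < hh t b) = (a < b)"
  unfolding hh_def by auto

lemma invs_mem_swp:
  assumes "Suc t < length L"
  shows "((hh t a, hh t b) \<in> invs (swp L t)) = (hh t a < hh t b \<and> b < length L \<and> L!a > L!b)"
proof -
  have "hh t a < hh t b \<Longrightarrow> b < length L \<Longrightarrow> a < length L"
    by (metis hh_lt_len[OF assms] less_trans)
  thus ?thesis using assms by (auto simp: invs_def swp_nth hh_lt_len)
qed

lemma invs_swp:
  assumes "Suc t < length L" "L!t > L!Suc t"
  shows "invs L = insert (t, Suc t) ((\<lambda>(a,b). (hh t a, hh t b)) ` invs (swp L t))"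
    and "(t, Suc t) \<notin> (\<lambda>(a,b). (hh t a, hh t b)) ` invs (swp L t)"
    and "inj_on (\<lambda>(a,b). (hh t a, hh t b)) X"
proof -
  show "inj_on (\<lambda>(a,b). (hh t a, hh t b)) X"
    by (rule inj_onI) (clarsimp, metis hhh)
  have h1: "hh t t = Suc t" "hh t (Suc t) = t" by (auto simp: hh_def)
  show "(t, Suc t) \<notin> (\<lambda>(a,b). (hh t a, hh t b)) ` invs (swp L t)"
    unfolding mem_g_image h1 by (simp add: invs_def)
  show "invs L = insert (t, Suc t) ((\<lambda>(a,b). (hh t a, hh t b)) ` invs (swp L t))"
  proof (rule set_eqI)
    fix x
    obtain a b :: nat where x: "x = (a,b)" by fastforce
    have "(a,b) \<in> invs L \<longleftrightarrow> (a,b) = (t, Suc t) \<or> (hh t a < hh t b \<and> b < length L \<and> L!a > L!b)"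
    proof (cases "a=t\<and>b=Suc t")
      case True thus ?thesis using assms by (simp add: invs_def)
    next
      case F1: False
      show ?thesis
      proof (cases "a=Suc t\<and>b=t")
        case True thus ?thesis using assms by (auto simp: invs_def)
      next
        case False thus ?thesis using F1 hh_order[of a t b] by (auto simp: invs_def)
      qed
    qed
    thus "x \<in> invs L \<longleftrightarrow> x \<in> insert (t, Suc t) ((\<lambda>(a,b). (hh t a, hh t b)) ` invs (swp L t))"
      unfolding x insert_iff mem_g_image invs_mem_swp[OF assms(1)] .
  qed
qed

lemma eps_alt: "eps q L = (if distinct L then (\<Prod>(s,u)\<in>invs L. - q (L!s) (L!u)) else 0)"
  by (simp add: eps_def invs_def)

lemma card_invs_swp:
  assumes "Suc t < length L" "L!t > L!Suc t"
  shows "card (invs (swp L t)) < card (invs L)"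
proof -
  note i = invs_swp[OF assms]
  have "card (invs L) = Suc (card ((\<lambda>(a,b). (hh t a, hh t b)) ` invs (swp L t)))"
    by (subst i(1)) (simp add: i(2) finite_invs)
  also have "\<dots> = Suc (card (invs (swp L t)))" by (simp add: card_image i(3))
  finally show ?thesis by simp
qed

lemma eps_swp_desc:
  assumes "Suc t < length L" "L!t > L!Suc t"
  shows "eps q L = - q (L!t) (L!Suc t) * eps q (swp L t)"
proof (cases "distinct L")
  case False thus ?thesis using assms by (simp add: eps_alt distinct_swp)
next
  case True
  note i = invs_swp[OF assms]
  have "(\<Prod>(s,u)\<in>invs L. - q (L!s) (L!u)) = - q (L!t) (L!Suc t) *
     (\<Prod>(s,u)\<in>(\<lambda>(a,b). (hh t a, hh t b)) ` invs (swp L t). - q (L!s) (L!u))"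
    by (subst i(1)) (simp add: i(2) finite_invs)
  also have "(\<Prod>(s,u)\<in>(\<lambda>(a,b). (hh t a, hh t b)) ` invs (swp L t). - q (L!s) (L!u))
     = (\<Prod>(s,u)\<in>invs (swp L t). - q (swp L t!s) (swp L t!u))"
    by (subst prod.reindex[OF i(3)]) (auto intro!: prod.cong simp: invs_def swp_nth assms(1))
  finally show ?thesis using True by (simp add: eps_alt distinct_swp assms(1))
qed


lemma eps_swp_asc:
  assumes "Suc t < length L" "L!t < L!Suc t"
  shows "eps q (swp L t) = - q (L!Suc t) (L!t) * eps q L"
proof -
  have "eps q (swp L t) = - q (swp L t!t) (swp L t!Suc t) * eps q (swp (swp L t) t)"
    by (rule eps_swp_desc) (use assms in \<open>simp_all add: swp_nth hh_def\<close>)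
  thus ?thesis using assms by (simp add: swp_swp swp_nth hh_def)
qed

lemma desc_induct:
  fixes L :: "nat list"
  assumes "\<And>L. sorted L \<Longrightarrow> P L"
    and "\<And>L t. Suc t < length L \<Longrightarrow> L!t > L!Suc t \<Longrightarrow> P (swp L t) \<Longrightarrow> P L"
  shows "P L"
proof (induct L rule: measure_induct_rule[of "\<lambda>L. card (invs L)"])
  case (less L)
  show ?case
  proof (cases "\<exists>t. Suc t < length L \<and> L!t > L!Suc t")
    case True
    then obtain t where t: "Suc t < length L" "L!t > L!Suc t" by blast
    show ?thesis by (rule assms(2)[OF t less(1)[OF card_invs_swp[OF t]]])
  next
    case False
    hence "sorted L" unfolding sorted_iff_nth_Suc by (meson not_le)
    thus ?thesis by (rule assms(1))
  qed
qed

lemma sorted_invs: "sorted L \<Longrightarrow> invs L = {}"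
  by (auto simp: invs_def sorted_iff_nth_mono leD)

lemma eps_sorted: "sorted L \<Longrightarrow> distinct L \<Longrightarrow> eps q L = 1"
  by (simp add: eps_alt sorted_invs)

lemma sort_swp: "Suc t < length L \<Longrightarrow> sort (swp L t) = sort L"
  by (rule properties_for_sort) (simp_all add: mset_swp)

lemma rev_swp: "Suc t < length L \<Longrightarrow> rev (swp L t) = swp (rev L) (length L - 2 - t)"
  by (rule nth_equalityI) (auto simp: swp_def nth_list_update rev_nth, (rule arg_cong[where f="nth L"]; linarith)+)

lemma param_inv: "param_matrix n p \<Longrightarrow> a \<in> {1..n} \<Longrightarrow> b \<in> {1..n} \<Longrightarrow> inverse (p a b) = p b a"
  unfolding param_matrix_def by (metis inverse_unique)

lemma param_neg: "param_matrix n p \<Longrightarrow> a \<in> {1..n} \<Longrightarrow> b \<in> {1..n} \<Longrightarrow> (- p a b) * (- p b a) = 1"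
  unfolding param_matrix_def by simp

lemma eps_rev:
  assumes pm: "param_matrix n p"
  shows "distinct L \<Longrightarrow> set L \<subseteq> {1..n} \<Longrightarrow>
    eps p (rev L) = eps p (rev (sort L)) * eps (\<lambda>i j. inverse (p i j)) L"
proof (induct L rule: desc_induct)
  case (1 L)
  thus ?case by (simp add: sorted_sort_id eps_sorted)
next
  case (2 L t)
  define L' where "L' = swp L t"
  have dL': "distinct L'" "set L' \<subseteq> {1..n}" using 2 by (simp_all add: L'_def distinct_swp set_swp)
  have IH: "eps p (rev L') = eps p (rev (sort L)) * eps (\<lambda>i j. inverse (p i j)) L'"
    using 2(3)[folded L'_def, OF dL'] 2(1) by (simp add: L'_def sort_swp)
  have "L!t \<in> set L" "L!Suc t \<in> set L" using 2(1) by (simp_all add: nth_mem)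
  hence a: "L!t \<in> {1..n}" "L!Suc t \<in> {1..n}" using 2(5) by blast+
  have e1: "eps (\<lambda>i j. inverse (p i j)) L = - p (L!Suc t) (L!t) * eps (\<lambda>i j. inverse (p i j)) L'"
    unfolding L'_def using eps_swp_desc[OF 2(1,2)] param_inv[OF pm a] by simp
  define t' where "t' = length L - 2 - t"
  have rl: "rev L' = swp (rev L) t'" unfolding L'_def t'_def by (rule rev_swp[OF 2(1)])
  have st': "Suc t' < length (rev L)" using 2(1) by (simp add: t'_def)
  have x1: "length L - Suc t' = Suc t" "length L - Suc (Suc t') = t" using 2(1) by (simp_all add: t'_def)
  have n1: "rev L ! t' = L ! Suc t" "rev L ! Suc t' = L ! t" using st' by (simp_all add: rev_nth x1)
  have e2: "eps p (rev L') = - p (L!t) (L!Suc t) * eps p (rev L)"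
    unfolding rl using eps_swp_asc[OF st'] n1 2(2) by simp
  have "eps p (rev L) = (- p (L!Suc t) (L!t)) * eps p (rev L')"
  proof -
    have "(- p (L!Suc t) (L!t)) * eps p (rev L') = ((- p (L!Suc t) (L!t)) * (- p (L!t) (L!Suc t))) * eps p (rev L)"
      unfolding e2 by (simp add: algebra_simps)
    thus ?thesis using param_neg[OF pm a(2) a(1)] by simp
  qed
  also have "\<dots> = eps p (rev (sort L)) * eps (\<lambda>i j. inverse (p i j)) L"
    unfolding IH e1 by (simp add: algebra_simps)
  finally show ?case .
qed




definition P :: "(nat \<Rightarrow> nat \<Rightarrow> 'a::ring_1) \<Rightarrow> nat list \<Rightarrow> nat list \<Rightarrow> 'a" where
  "P X R L = prod_list (map (\<lambda>(a,b). X a b) (zip R L))"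

lemma P_Cons[simp]: "P X (a#R) (b#L) = X a b * P X R L"
  by (simp add: P_def)

lemma P_Nil[simp]: "P X [] L = 1"
  by (simp add: P_def)

lemma P_append: "length R1 = length L1 \<Longrightarrow> P X (R1@R2) (L1@L2) = P X R1 L1 * P X R2 L2"
  by (simp add: P_def)

lemma P_snoc: "length R = length L \<Longrightarrow> P X (R@[a]) (L@[b]) = P X R L * X a b"
  by (simp add: P_append)

lemma P_split:
  assumes "Suc t < length R" "length L = length R"
  shows "P X R L = P X (take t R) (take t L) * (X (R!t) (L!t) * X (R!Suc t) (L!Suc t))
     * P X (drop (Suc (Suc t)) R) (drop (Suc (Suc t)) L)"
proof -
  have r: "R = take t R @ R!t # R!Suc t # drop (Suc (Suc t)) R"
    using assms by (metis Cons_nth_drop_Suc Suc_lessD append_take_drop_id)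
  have l: "L = take t L @ L!t # L!Suc t # drop (Suc (Suc t)) L"
    using assms by (metis Cons_nth_drop_Suc Suc_lessD append_take_drop_id)
  have "P X R L = P X (take t R @ R!t # R!Suc t # drop (Suc (Suc t)) R) (take t L @ L!t # L!Suc t # drop (Suc (Suc t)) L)"
    using r l by simp
  also have "\<dots> = P X (take t R) (take t L) * (X (R!t) (L!t) * (X (R!Suc t) (L!Suc t)
     * P X (drop (Suc (Suc t)) R) (drop (Suc (Suc t)) L)))"
    using assms by (subst P_append) simp_all
  finally show ?thesis by (simp add: mult.assoc)
qed

lemma take_swp: "Suc t < length R \<Longrightarrow> take t (swp R t) = take t R"
  by (rule nth_equalityI) (simp_all add: swp_def nth_list_update)

lemma drop_swp: "Suc t < length R \<Longrightarrow> drop (Suc (Suc t)) (swp R t) = drop (Suc (Suc t)) R"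
  by (rule nth_equalityI) (simp_all add: swp_def nth_list_update)

lemma swp_nth1: "Suc t < length R \<Longrightarrow> swp R t ! t = R ! Suc t"
  by (simp add: swp_def nth_list_update)
lemma swp_nth2: "Suc t < length R \<Longrightarrow> swp R t ! Suc t = R ! t"
  by (simp add: swp_def nth_list_update)

definition C :: "(complex \<Rightarrow> 'a::ring_1) \<Rightarrow> (nat \<Rightarrow> nat \<Rightarrow> complex) \<Rightarrow> (nat \<Rightarrow> nat \<Rightarrow> 'a)
    \<Rightarrow> nat list \<Rightarrow> nat list \<Rightarrow> 'a" where
  "C phi q X I L = (\<Sum>R\<in>{R. mset R = mset I}. phi (eps q R) * P X R L)"

lemma finite_S: "finite {R. mset R = mset (I::nat list)}"
proof (rule finite_subset)
  show "{R. mset R = mset I} \<subseteq> {xs. set xs \<subseteq> set I \<and> length xs = length I}"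
    by (auto dest: mset_eq_setD mset_eq_length)
  show "finite {xs. set xs \<subseteq> set I \<and> length xs = length I}"
    by (rule finite_lists_length_eq) simp
qed

lemma sum_pair:
  fixes f :: "nat list \<Rightarrow> 'a::comm_monoid_add"
  assumes fin: "finite S" and H: "\<And>R. R \<in> S \<Longrightarrow> distinct R \<and> Suc t < length R \<and> swp R t \<in> S"
  shows "(\<Sum>R\<in>S. f R) = (\<Sum>R\<in>{R\<in>S. R!t < R!Suc t}. f R + f (swp R t))"
proof -
  let ?S1 = "{R\<in>S. R!t < R!Suc t}"
  let ?S2 = "{R\<in>S. R!t > R!Suc t}"
  have un: "S = ?S1 \<union> ?S2"
  proof -
    have "R!t \<noteq> R!Suc t" if "R \<in> S" for R
      using H[OF that] by (simp add: nth_eq_iff_index_eq)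
    thus ?thesis by (auto simp: neq_iff)
  qed
  have im: "?S2 = (\<lambda>R. swp R t) ` ?S1"
  proof (intro set_eqI iffI)
    fix R assume R: "R \<in> ?S2"
    hence "swp R t \<in> ?S1" using H[of R] by (simp add: swp_nth1 swp_nth2)
    moreover have "R = swp (swp R t) t" using H[of R] R by (simp add: swp_swp)
    ultimately show "R \<in> (\<lambda>R. swp R t) ` ?S1" by blast
  next
    fix R assume "R \<in> (\<lambda>R. swp R t) ` ?S1"
    then obtain R0 where "R0 \<in> ?S1" "R = swp R0 t" by blast
    thus "R \<in> ?S2" using H[of R0] by (simp add: swp_nth1 swp_nth2)
  qed
  have inj: "inj_on (\<lambda>R. swp R t) ?S1"
    by (rule inj_onI) (metis (no_types, lifting) H mem_Collect_eq swp_swp)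
  have "(\<Sum>R\<in>S. f R) = (\<Sum>R\<in>?S1. f R) + (\<Sum>R\<in>?S2. f R)"
    by (subst un, rule sum.union_disjoint) (use fin in auto)
  also have "(\<Sum>R\<in>?S2. f R) = (\<Sum>R\<in>?S1. f (swp R t))"
    unfolding im by (subst sum.reindex[OF inj]) simp
  finally show ?thesis by (simp add: sum.distrib)
qed

lemma grp4: "(a::'a::ab_group_add) - b + c - d = 0 \<Longrightarrow> a - d = b - c"
  by (simp add: algebra_simps)

lemma manin_D:
  assumes c: "calg phi" and mn: "manin phi n q p M" and pp: "param_matrix n p"
    and ij: "i < j" "i \<in> {1..n}" "j \<in> {1..n}" and kl: "k \<in> {1..n}" "l \<in> {1..n}" "k \<noteq> l"
  shows "M i k * M j l - phi (q j i) * (M j k * M i l) = phi (- p k l) * (M i l * M j k - phi (q j i) * (M j l * M i k))"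
proof -
  have gen: "M i k * M j l - phi (q j i) * (M j k * M i l) = phi (- p k l) * (M i l * M j k - phi (q j i) * (M j l * M i k))"
    if "k < l" "k \<in> {1..n}" "l \<in> {1..n}" for k l
  proof -
    have e: "M i k * M j l - phi (q j i * p k l) * M j l * M i k + phi (p k l) * M i l * M j k
          - phi (q j i) * M j k * M i l = 0"
      using mn ij that unfolding manin_def by blast
    have pq: "phi (q j i * p k l) = phi (p k l) * phi (q j i)"
      using calg_mult[OF c, of "p k l" "q j i"] by (simp add: mult.commute)
    have "M i k * M j l - phi (q j i) * (M j k * M i l) =
        phi (q j i * p k l) * M j l * M i k - phi (p k l) * M i l * M j k"
      using grp4[OF e] by (simp add: mult.assoc)
    also have "\<dots> = phi (- p k l) * (M i l * M j k - phi (q j i) * (M j l * M i k))"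
      unfolding pq calg_uminus[OF c] by (simp add: algebra_simps)
    finally show ?thesis .
  qed
  show ?thesis
  proof (cases "k < l")
    case True thus ?thesis using gen kl by blast
  next
    case False
    hence "l < k" using kl by simp
    from gen[OF this kl(2,1)]
    have "M i l * M j k - phi (q j i) * (M j l * M i k) = phi (- p l k) * (M i k * M j l - phi (q j i) * (M j k * M i l))" .
    hence "phi (- p k l) * (M i l * M j k - phi (q j i) * (M j l * M i k))
        = (phi (- p k l) * phi (- p l k)) * (M i k * M j l - phi (q j i) * (M j k * M i l))"
      by (simp add: mult.assoc)
    also have "phi (- p k l) * phi (- p l k) = 1"
      unfolding calg_mult[OF c, symmetric] using param_neg[OF pp kl(1,2)] calg_1[OF c] by simp
    finally show ?thesis by simp
  qed
qed

lemma manin_D0: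
  assumes c: "calg phi" and mn: "manin phi n q p M"
    and ij: "i < j" "i \<in> {1..n}" "j \<in> {1..n}" and k: "k \<in> {1..n}"
  shows "M i k * M j k - phi (q j i) * (M j k * M i k) = 0"
proof -
  have "M i k * M j k = phi (q j i) * M j k * M i k" using mn ij k unfolding manin_def by blast
  thus ?thesis by (simp add: mult.assoc)
qed


lemma comb_alg:
  fixes c1 c2 Pa Pb X1 X2 :: "'a::ring_1"
  assumes "\<And>x. c2 * x = x * c2"
  shows "c1 * (Pa * X1 * Pb) + (- (c2 * c1)) * (Pa * X2 * Pb) = c1 * (Pa * (X1 - c2 * X2) * Pb)"
proof -
  have a: "c2 * c1 = c1 * c2" using assms by simp
  have b: "c2 * (Pa * X2 * Pb) = Pa * (c2 * X2) * Pb"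
    by (metis assms mult.assoc)
  have "(- (c2 * c1)) * (Pa * X2 * Pb) = - (c1 * (Pa * (c2 * X2) * Pb))"
    by (simp add: a mult.assoc b[unfolded mult.assoc])
  thus ?thesis by (simp add: algebra_simps)
qed

lemma pair_term:
  assumes c: "calg phi" and t: "Suc t < length R" and len: "length L = length R" and ij: "R!t < R!Suc t"
  shows "phi (eps q R) * P M R L + phi (eps q (swp R t)) * P M (swp R t) L =
    phi (eps q R) * (P M (take t R) (take t L) * (M (R!t) (L!t) * M (R!Suc t) (L!Suc t)
      - phi (q (R!Suc t) (R!t)) * (M (R!Suc t) (L!t) * M (R!t) (L!Suc t)))
      * P M (drop (Suc (Suc t)) R) (drop (Suc (Suc t)) L))"
proof -
  have e: "phi (eps q (swp R t)) = - (phi (q (R!Suc t) (R!t)) * phi (eps q R))"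
    unfolding eps_swp_asc[OF t ij] calg_mult[OF c] calg_uminus[OF c] by simp
  have p1: "P M R L = P M (take t R) (take t L) * (M (R!t) (L!t) * M (R!Suc t) (L!Suc t))
     * P M (drop (Suc (Suc t)) R) (drop (Suc (Suc t)) L)"
    by (rule P_split[OF t len])
  have p2: "P M (swp R t) L = P M (take t R) (take t L) * (M (R!Suc t) (L!t) * M (R!t) (L!Suc t))
     * P M (drop (Suc (Suc t)) R) (drop (Suc (Suc t)) L)"
    using P_split[of t "swp R t" L M] t len by (simp add: take_swp drop_swp swp_nth1 swp_nth2)
  show ?thesis unfolding e p1 p2
    by (rule comb_alg) (rule calg_comm[OF c])
qed

lemma C_pairs:
  fixes I :: "nat list"
  assumes dI: "distinct I" and t: "Suc t < length I"
  shows "C phi q M I L = (\<Sum>R\<in>{R\<in>{R. mset R = mset I}. R!t < R!Suc t}.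
      phi (eps q R) * P M R L + phi (eps q (swp R t)) * P M (swp R t) L)"
  unfolding C_def
proof (rule sum_pair[OF finite_S])
  fix R assume "R \<in> {R. mset R = mset I}"
  hence m: "mset R = mset I" by simp
  show "distinct R \<and> Suc t < length R \<and> swp R t \<in> {R. mset R = mset I}"
    using mset_eq_imp_distinct_iff[OF m] mset_eq_length[OF m] dI t m mset_swp[of t R] by simp
qed

lemma S_facts:
  assumes "R \<in> {R. mset R = mset I}"
  shows "set R = set I" "length R = length I" "distinct R = distinct I"
proof -
  have m: "mset R = mset I" using assms by simp
  show "set R = set I" by (rule mset_eq_setD[OF m])
  show "length R = length I" by (rule mset_eq_length[OF m])
  show "distinct R = distinct I" by (rule mset_eq_imp_distinct_iff[OF m])
qed

lemma nth_in: "set L \<subseteq> A \<Longrightarrow> i < length L \<Longrightarrow> L!i \<in> A"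
  by (meson nth_mem subsetD)

lemma C_swap:
  assumes c: "calg phi" and mn: "manin phi n q p M" and pp: "param_matrix n p"
    and dI: "distinct I" and sI: "set I \<subseteq> {1..n}" and sL: "set L \<subseteq> {1..n}"
    and len: "length L = length I" and t: "Suc t < length L" and ne: "L!t \<noteq> L!Suc t"
  shows "C phi q M I L = phi (- p (L!t) (L!Suc t)) * C phi q M I (swp L t)"
proof -
  let ?S1 = "{R\<in>{R. mset R = mset I}. R!t < R!Suc t}"
  let ?c3 = "phi (- p (L!t) (L!Suc t))"
  have "C phi q M I L = (\<Sum>R\<in>?S1. phi (eps q R) * P M R L + phi (eps q (swp R t)) * P M (swp R t) L)"
    using C_pairs[OF dI] t len by simp
  also have "\<dots> = (\<Sum>R\<in>?S1. ?c3 * (phi (eps q R) * P M R (swp L t) + phi (eps q (swp R t)) * P M (swp R t) (swp L t)))"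
  proof (rule sum.cong[OF refl])
    fix R assume R: "R \<in> ?S1"
    have lR: "length R = length I" and sR: "set R = set I" using S_facts[of R I] R by auto
    have tR: "Suc t < length R" using t len lR by simp
    have ij: "R!t < R!Suc t" using R by simp
    have inR: "R!t \<in> {1..n}" "R!Suc t \<in> {1..n}" proof -
      have sRn: "set R \<subseteq> {1..n}" using sI sR by simp
      show "R!t \<in> {1..n}" by (rule nth_in[OF sRn]) (use tR in simp)
      show "R!Suc t \<in> {1..n}" by (rule nth_in[OF sRn]) (use tR in simp)
    qed
    have inL: "L!t \<in> {1..n}" "L!Suc t \<in> {1..n}"
      by (rule nth_in[OF sL], use t in simp)+
    have lens: "length L = length R" "length (swp L t) = length R" using len lR by simp_all
    note D = manin_D[OF c mn pp ij inR inL ne]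
    show "phi (eps q R) * P M R L + phi (eps q (swp R t)) * P M (swp R t) L =
      ?c3 * (phi (eps q R) * P M R (swp L t) + phi (eps q (swp R t)) * P M (swp R t) (swp L t))"
      unfolding pair_term[OF c tR lens(1) ij] pair_term[OF c tR lens(2) ij]
      using t by (simp add: take_swp drop_swp swp_nth1 swp_nth2 D mult.assoc calg_comm[OF c, of "- p (L!t) (L!Suc t)"])
  qed
  also have "\<dots> = ?c3 * C phi q M I (swp L t)"
    using C_pairs[OF dI, of t phi q M "swp L t"] t len by (simp add: sum_distrib_left)
  finally show ?thesis .
qed

lemma C_zero:
  assumes c: "calg phi" and mn: "manin phi n q p M"
    and dI: "distinct I" and sI: "set I \<subseteq> {1..n}" and sL: "set L \<subseteq> {1..n}"
    and len: "length L = length I" and t: "Suc t < length L" and eq: "L!t = L!Suc t"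
  shows "C phi q M I L = 0"
proof -
  let ?S1 = "{R\<in>{R. mset R = mset I}. R!t < R!Suc t}"
  have "C phi q M I L = (\<Sum>R\<in>?S1. phi (eps q R) * P M R L + phi (eps q (swp R t)) * P M (swp R t) L)"
    using C_pairs[OF dI] t len by simp
  also have "\<dots> = (\<Sum>R\<in>?S1. 0)"
  proof (rule sum.cong[OF refl])
    fix R assume R: "R \<in> ?S1"
    have lR: "length R = length I" and sR: "set R = set I" using S_facts[of R I] R by auto
    have tR: "Suc t < length R" using t len lR by simp
    have ij: "R!t < R!Suc t" using R by simp
    have inR: "R!t \<in> {1..n}" "R!Suc t \<in> {1..n}" proof -
      have sRn: "set R \<subseteq> {1..n}" using sI sR by simp
      show "R!t \<in> {1..n}" by (rule nth_in[OF sRn]) (use tR in simp)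
      show "R!Suc t \<in> {1..n}" by (rule nth_in[OF sRn]) (use tR in simp)
    qed
    have inL: "L!t \<in> {1..n}"
      by (rule nth_in[OF sL], use t in simp)+
    have lens: "length L = length R" using len lR by simp_all
    show "phi (eps q R) * P M R L + phi (eps q (swp R t)) * P M (swp R t) L = 0"
      unfolding pair_term[OF c tR lens(1) ij] eq[symmetric] manin_D0[OF c mn ij inR inL] by simp
  qed
  finally show ?thesis by simp
qed



lemma sorted_nd_adj:
  fixes L :: "nat list"
  assumes "sorted L" "\<not> distinct L"
  shows "\<exists>t. Suc t < length L \<and> L!t = L!Suc t"
proof (rule ccontr)
  assume "\<not> ?thesis"
  hence "\<forall>t. Suc t < length L \<longrightarrow> L!t < L!Suc t"
    using assms(1) unfolding sorted_iff_nth_Suc by (metis le_neq_implies_less)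
  hence "sorted_wrt (<) L" by (subst sorted_wrt_iff_nth_Suc_transp) (auto simp: transp_def)
  thus False using assms(2) strict_sorted_iff by blast
qed

lemma C_sort:
  assumes c: "calg phi" and mn: "manin phi n q p M" and pp: "param_matrix n p"
    and dI: "distinct I" and sI: "set I \<subseteq> {1..n}"
  shows "set L \<subseteq> {1..n} \<Longrightarrow> length L = length I \<Longrightarrow> C phi q M I L = phi (eps p L) * C phi q M I (sort L)"
proof (induct L rule: desc_induct)
  case (1 L)
  show ?case
  proof (cases "distinct L")
    case True thus ?thesis using 1 by (simp add: sorted_sort_id eps_sorted calg_1[OF c])
  next
    case False
    then obtain t where t: "Suc t < length L" "L!t = L!Suc t" using sorted_nd_adj 1(1) by blast
    have "C phi q M I L = 0" by (rule C_zero[OF c mn dI sI 1(2) 1(3) t])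
    thus ?thesis using False by (simp add: eps_def calg_0[OF c])
  qed
next
  case (2 L t)
  have sL': "set (swp L t) \<subseteq> {1..n}" "length (swp L t) = length I" using 2 by (simp_all add: set_swp)
  have IH: "C phi q M I (swp L t) = phi (eps p (swp L t)) * C phi q M I (sort L)"
    using 2(3)[OF sL'] 2(1) by (simp add: sort_swp)
  have "C phi q M I L = phi (- p (L!t) (L!Suc t)) * C phi q M I (swp L t)"
    by (rule C_swap[OF c mn pp dI sI 2(4) 2(5) 2(1)]) (use 2(2) in simp)
  also have "\<dots> = phi (- p (L!t) (L!Suc t) * eps p (swp L t)) * C phi q M I (sort L)"
    unfolding IH calg_mult[OF c] by (simp add: mult.assoc)
  also have "- p (L!t) (L!Suc t) * eps p (swp L t) = eps p L"
    by (rule eps_swp_desc[symmetric, OF 2(1,2)])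
  finally show ?case .
qed

lemma sorted_less_iff:
  assumes "sorted_wrt (<) (I::nat list)" "a < length I" "b < length I"
  shows "(I!a < I!b) = (a < b)"
proof
  assume "a < b" thus "I!a < I!b" using assms sorted_wrt_nth_less by blast
next
  assume h: "I!a < I!b"
  show "a < b"
  proof (rule ccontr)
    assume "\<not> a < b"
    hence "b = a \<or> b < a" by auto
    thus False using h assms sorted_wrt_nth_less[of "(<)" I b a] by auto
  qed
qed

lemma P_nth: "length L = length R \<Longrightarrow> P X R L = prod_list (map (\<lambda>s. X (R!s) (L!s)) [0..<length R])"
  unfolding P_def by (rule arg_cong[where f=prod_list], rule nth_equalityI) simp_all

lemma cdet_C:
  assumes sI: "sorted_wrt (<) I" and len: "length L = length I"
  shows "cdet phi q X I L = C phi q X I L"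
proof -
  let ?m = "length I"
  have dI: "distinct I" using sI strict_sorted_iff by blast
  have bij: "bij_betw (\<lambda>\<sigma>. permute_list \<sigma> I) {\<sigma>. \<sigma> permutes {0..<?m}} {R. mset R = mset I}"
  proof (rule bij_betw_imageI)
    show "inj_on (\<lambda>\<sigma>. permute_list \<sigma> I) {\<sigma>. \<sigma> permutes {0..<?m}}"
    proof (rule inj_onI)
      fix \<sigma> \<tau> assume s: "\<sigma> \<in> {\<sigma>. \<sigma> permutes {0..<?m}}" and t: "\<tau> \<in> {\<sigma>. \<sigma> permutes {0..<?m}}"
        and e: "permute_list \<sigma> I = permute_list \<tau> I"
      show "\<sigma> = \<tau>"
      proof
        fix x
        show "\<sigma> x = \<tau> x"
        proof (cases "x < ?m")
          case True
          have "permute_list \<sigma> I ! x = permute_list \<tau> I ! x" using e by simp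
          hence "I ! \<sigma> x = I ! \<tau> x" using s t True by (simp add: permute_list_nth atLeast0LessThan)
          moreover have "\<sigma> x < ?m" "\<tau> x < ?m"
            using permutes_in_image[of \<sigma> "{..<?m}" x] permutes_in_image[of \<tau> "{..<?m}" x] s t True
            by (simp_all add: atLeast0LessThan)
          ultimately show ?thesis using dI nth_eq_iff_index_eq by blast
        next
          case False
          thus ?thesis using s t by (simp add: permutes_not_in atLeast0LessThan)
        qed
      qed
    qed
    show "(\<lambda>\<sigma>. permute_list \<sigma> I) ` {\<sigma>. \<sigma> permutes {0..<?m}} = {R. mset R = mset I}"
    proof (intro set_eqI iffI)
      fix R assume "R \<in> (\<lambda>\<sigma>. permute_list \<sigma> I) ` {\<sigma>. \<sigma> permutes {0..<?m}}"
      thus "R \<in> {R. mset R = mset I}" by (auto simp: atLeast0LessThan)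
    next
      fix R assume "R \<in> {R. mset R = mset I}"
      hence "mset R = mset I" by simp
      then obtain \<sigma> where "\<sigma> permutes {..<?m}" "permute_list \<sigma> I = R" by (rule mset_eq_permutation)
      thus "R \<in> (\<lambda>\<sigma>. permute_list \<sigma> I) ` {\<sigma>. \<sigma> permutes {0..<?m}}"
        by (auto simp: atLeast0LessThan)
    qed
  qed
  have tm: "phi (eps_perm q I \<sigma>) * prod_list (map (\<lambda>s. X (I!(\<sigma> s)) (L!s)) [0..<?m])
      = phi (eps q (permute_list \<sigma> I)) * P X (permute_list \<sigma> I) L"
    if s: "\<sigma> permutes {0..<?m}" for \<sigma>
  proof -
    have s': "\<sigma> permutes {..<?m}" using s by (simp add: atLeast0LessThan)
    have img: "x < ?m \<Longrightarrow> \<sigma> x < ?m" for x using permutes_in_image[OF s'] by simp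
    have key: "(permute_list \<sigma> I ! b < permute_list \<sigma> I ! a) = (\<sigma> b < \<sigma> a)"
      if "a < ?m" "b < ?m" for a b
      using permute_list_nth[OF s'] sorted_less_iff[OF sI img[OF that(2)] img[OF that(1)]] that by simp
    have seteq: "{(s,t). s < t \<and> t < ?m \<and> \<sigma> s > \<sigma> t} =
          {(s,t). s < t \<and> t < length (permute_list \<sigma> I) \<and> permute_list \<sigma> I ! s > permute_list \<sigma> I ! t}"
    proof (rule set_eqI)
      fix x :: "nat \<times> nat"
      obtain a b where x: "x = (a,b)" by fastforce
      show "x \<in> {(s,t). s < t \<and> t < ?m \<and> \<sigma> s > \<sigma> t} \<longleftrightarrow>
          x \<in> {(s,t). s < t \<and> t < length (permute_list \<sigma> I) \<and> permute_list \<sigma> I ! s > permute_list \<sigma> I ! t}"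
      proof (cases "a < b \<and> b < ?m")
        case True
        hence "a < ?m" by simp
        thus ?thesis using True key[of a b] unfolding x by simp
      next
        case False thus ?thesis unfolding x by auto
      qed
    qed
    have e: "eps_perm q I \<sigma> = eps q (permute_list \<sigma> I)"
    proof -
      have "distinct (permute_list \<sigma> I)" using dI s' by simp
      hence "eps q (permute_list \<sigma> I) = (\<Prod>(s,t)\<in>{(s,t). s < t \<and> t < ?m \<and> \<sigma> s > \<sigma> t}.
           - q (permute_list \<sigma> I ! s) (permute_list \<sigma> I ! t))"
        unfolding eps_def seteq by simp
      also have "\<dots> = eps_perm q I \<sigma>"
        unfolding eps_perm_def by (rule prod.cong[OF refl]) (clarsimp simp: permute_list_nth[OF s'])
      finally show ?thesis by simp
    qed
    have p: "prod_list (map (\<lambda>s. X (I!(\<sigma> s)) (L!s)) [0..<?m]) = P X (permute_list \<sigma> I) L"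
      using len by (subst P_nth) (auto simp: permute_list_nth[OF s'] intro!: arg_cong[where f=prod_list])
    show ?thesis using e p by simp
  qed
  have "cdet phi q X I L = (\<Sum>\<sigma>\<in>{\<sigma>. \<sigma> permutes {0..<?m}}. phi (eps q (permute_list \<sigma> I)) * P X (permute_list \<sigma> I) L)"
    unfolding cdet_def using tm by (intro sum.cong) auto
  also have "\<dots> = C phi q X I L"
    unfolding C_def by (rule sum.reindex_bij_betw[OF bij])
  finally show ?thesis .
qed



lemma contract:
  fixes M N :: "nat \<Rightarrow> nat \<Rightarrow> 'a::ring_1"
  assumes inv: "\<And>r j. r \<in> {1..n} \<Longrightarrow> j \<in> {1..n} \<Longrightarrow> (\<Sum>x=1..n. M r x * N x j) = (if r = j then 1 else 0)"
  shows "length R = m \<Longrightarrow> length J = m \<Longrightarrow> set R \<subseteq> {1..n} \<Longrightarrow> set J \<subseteq> {1..n} \<Longrightarrow>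
    (\<Sum>L\<in>{xs. set xs \<subseteq> {1..n} \<and> length xs = m}. P M (rev R) (rev L) * P N L J) = (if R = J then 1 else 0)"
proof (induct m arbitrary: R J)
  case 0
  hence "R = []" "J = []" by simp_all
  moreover have "{xs. set xs \<subseteq> {1..n} \<and> length xs = 0} = {[]}" by auto
  ultimately show ?case by simp
next
  case (Suc m)
  obtain r R' where R: "R = r # R'" using Suc(2) by (cases R) auto
  obtain j J' where J: "J = j # J'" using Suc(3) by (cases J) auto
  have lR': "length R' = m" "length J' = m" using Suc(2,3) R J by simp_all
  have sR': "set R' \<subseteq> {1..n}" "set J' \<subseteq> {1..n}" "r \<in> {1..n}" "j \<in> {1..n}" using Suc(4,5) R J by simp_all
  let ?Lm = "{xs. set xs \<subseteq> {1..n} \<and> length xs = m}"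
  have inj: "inj_on (\<lambda>(xs, n). n # xs) (?Lm \<times> {1..n})" by (rule inj_onI) auto
  have "(\<Sum>L\<in>{xs. set xs \<subseteq> {1..n} \<and> length xs = Suc m}. P M (rev R) (rev L) * P N L J)
      = (\<Sum>(L', x)\<in>?Lm \<times> {1..n}. P M (rev R) (rev (x # L')) * P N (x # L') J)"
    unfolding lists_length_Suc_eq by (subst sum.reindex[OF inj]) (simp add: case_prod_beta)
  also have "\<dots> = (\<Sum>L'\<in>?Lm. \<Sum>x\<in>{1..n}. P M (rev R) (rev (x # L')) * P N (x # L') J)"
    by (rule sum.cartesian_product[symmetric])
  also have "\<dots> = (\<Sum>L'\<in>?Lm. P M (rev R') (rev L') * (\<Sum>x\<in>{1..n}. M r x * N x j) * P N L' J')"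
  proof (rule sum.cong[OF refl])
    fix L' assume L': "L' \<in> ?Lm"
    have "P M (rev R) (rev (x # L')) * P N (x # L') J = P M (rev R') (rev L') * (M r x * N x j) * P N L' J'" for x
      using L' lR' unfolding R J by (simp add: P_snoc mult.assoc)
    thus "(\<Sum>x\<in>{1..n}. P M (rev R) (rev (x # L')) * P N (x # L') J) =
        P M (rev R') (rev L') * (\<Sum>x\<in>{1..n}. M r x * N x j) * P N L' J'"
      by (simp add: sum_distrib_left sum_distrib_right)
  qed
  also have "\<dots> = (if r = j then 1 else 0) * (\<Sum>L'\<in>?Lm. P M (rev R') (rev L') * P N L' J')"
    unfolding inv[OF sR'(3,4)] by (simp add: sum_distrib_left)
  also have "\<dots> = (if R = J then 1 else 0)"
    unfolding Suc(1)[OF lR' sR'(1,2)] R J by simp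
  finally show ?case .
qed

lemma sort_eq_sorted:
  fixes K L :: "nat list"
  assumes "mset L = mset K" "sorted_wrt (<) K"
  shows "sort L = K"
  by (rule properties_for_sort) (use assms strict_sorted_iff in auto)

lemma main1:
  fixes phi :: "complex \<Rightarrow> 'a::ring_1"
    and n m :: nat
    and q p :: "nat \<Rightarrow> nat \<Rightarrow> complex"
    and M N :: "nat \<Rightarrow> nat \<Rightarrow> 'a"
    and I J :: "nat list"
  assumes c: "calg phi" and pq: "param_matrix n q" and pp: "param_matrix n p"
    and mn: "manin phi n q p M" and inv: "is_inverse n M N"
    and lenI: "length I = m" and sI: "sorted_wrt (<) I" and setI: "set I \<subseteq> {1..n}"
    and lenJ: "length J = m" and setJ: "set J \<subseteq> {1..n}"
  shows "(\<Sum>K\<in>{K. length K = m \<and> sorted_wrt (<) K \<and> set K \<subseteq> {1..n}}.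
            phi (eps p (rev K)) * cdet phi q M I K
              * cdet phi (\<lambda>i j. inverse (p i j)) N K J)
         = phi (eps q (rev J)) * (if I = sort J then 1 else 0)"
proof -
  let ?KS = "{K. length K = m \<and> sorted_wrt (<) K \<and> set K \<subseteq> {1..n}}"
  let ?AL = "{xs. set xs \<subseteq> {1..n} \<and> length xs = m}"
  let ?DL = "{L\<in>?AL. distinct L}"
  let ?S = "\<lambda>K::nat list. {R. mset R = mset K}"
  let ?p' = "\<lambda>i j. inverse (p i j)"
  let ?g = "\<lambda>L. C phi q M I (rev L) * P N L J"
  have dI: "distinct I" using sI strict_sorted_iff by blast
  have finAL: "finite ?AL" by (rule finite_lists_length_eq) simp
  have step1: "phi (eps p (rev K)) * cdet phi q M I K * cdet phi ?p' N K J = (\<Sum>L\<in>?S K. ?g L)"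
    if K: "K \<in> ?KS" for K
  proof -
    have sK: "sorted_wrt (<) K" "length K = m" "set K \<subseteq> {1..n}" using K by auto
    have dK: "distinct K" using sK strict_sorted_iff by blast
    have "phi (eps p (rev K)) * cdet phi q M I K * cdet phi ?p' N K J
       = (\<Sum>L\<in>?S K. phi (eps p (rev K)) * C phi q M I K * (phi (eps ?p' L) * P N L J))"
    proof -
      have c1: "cdet phi q M I K = C phi q M I K" by (rule cdet_C[OF sI]) (use sK lenI in simp)
      have c2: "cdet phi ?p' N K J = C phi ?p' N K J" by (rule cdet_C[OF sK(1)]) (use sK lenJ in simp)
      show ?thesis unfolding c1 c2 by (simp add: C_def[of phi ?p'] sum_distrib_left)
    qed
    also have "\<dots> = (\<Sum>L\<in>?S K. ?g L)"
    proof (rule sum.cong[OF refl])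
      fix L assume L: "L \<in> ?S K"
      have mL: "mset L = mset K" using L by simp
      have dL: "distinct L" and setL: "set L \<subseteq> {1..n}" and lL: "length L = m"
        using S_facts[OF L] dK sK by auto
      have soL: "sort L = K" by (rule sort_eq_sorted[OF mL sK(1)])
      have soR: "sort (rev L) = K" by (rule sort_eq_sorted) (use mL sK in simp_all)
      have e: "eps p (rev L) = eps p (rev K) * eps ?p' L"
        using eps_rev[OF pp dL setL] soL by simp
      have CL: "C phi q M I (rev L) = phi (eps p (rev L)) * C phi q M I K"
        using C_sort[OF c mn pp dI setI, of "rev L"] setL lL lenI soR by simp
      have "phi (eps p (rev K)) * C phi q M I K * (phi (eps ?p' L) * P N L J)
          = phi (eps p (rev K)) * (C phi q M I K * phi (eps ?p' L)) * P N L J"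
        by (simp add: mult.assoc)
      also have "\<dots> = phi (eps p (rev K)) * (phi (eps ?p' L) * C phi q M I K) * P N L J"
        by (simp add: calg_comm[OF c])
      also have "\<dots> = ?g L"
        unfolding CL e calg_mult[OF c] by (simp add: mult.assoc)
      finally show "phi (eps p (rev K)) * C phi q M I K * (phi (eps ?p' L) * P N L J) = ?g L" .
    qed
    finally show ?thesis .
  qed
  have finKS: "finite ?KS" by (rule finite_subset[OF _ finAL]) auto
  have disj: "\<forall>K\<in>?KS. \<forall>K'\<in>?KS. K \<noteq> K' \<longrightarrow> ?S K \<inter> ?S K' = {}"
  proof (intro ballI impI)
    fix K K' assume K: "K \<in> ?KS" and K': "K' \<in> ?KS" and ne: "K \<noteq> K'"
    show "?S K \<inter> ?S K' = {}"
    proof (rule ccontr)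
      assume "?S K \<inter> ?S K' \<noteq> {}"
      then obtain L where m1: "mset L = mset K" and m2: "mset L = mset K'" by auto
      have "sort L = K" by (rule sort_eq_sorted[OF m1]) (use K in simp)
      moreover have "sort L = K'" by (rule sort_eq_sorted[OF m2]) (use K' in simp)
      ultimately have "K = K'" by simp
      thus False using ne by simp
    qed
  qed
  have UN: "(\<Union>K\<in>?KS. ?S K) = ?DL"
  proof (intro set_eqI iffI)
    fix L assume "L \<in> (\<Union>K\<in>?KS. ?S K)"
    then obtain K where K: "K \<in> ?KS" "L \<in> ?S K" by blast
    have dK: "distinct K" using K strict_sorted_iff by blast
    show "L \<in> ?DL" using S_facts[OF K(2)] K(1) dK by auto
  next
    fix L assume L: "L \<in> ?DL"
    have "sort L \<in> ?KS" using L by (auto simp: strict_sorted_iff)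
    moreover have "L \<in> ?S (sort L)" by simp
    ultimately show "L \<in> (\<Union>K\<in>?KS. ?S K)" by blast
  qed
  have "(\<Sum>K\<in>?KS. phi (eps p (rev K)) * cdet phi q M I K * cdet phi ?p' N K J)
      = (\<Sum>K\<in>?KS. \<Sum>L\<in>?S K. ?g L)"
    using step1 by (rule sum.cong[OF refl])
  also have "\<dots> = (\<Sum>L\<in>(\<Union>K\<in>?KS. ?S K). ?g L)"
    by (rule sum.UNION_disjoint[symmetric, OF finKS _ disj]) (simp add: finite_S)
  also have "\<dots> = (\<Sum>L\<in>?AL. ?g L)"
    unfolding UN
  proof (rule sum.mono_neutral_left[OF finAL])
    show "?DL \<subseteq> ?AL" by auto
    show "\<forall>L\<in>?AL - ?DL. ?g L = 0"
    proof
      fix L assume L: "L \<in> ?AL - ?DL"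
      have "C phi q M I (rev L) = phi (eps p (rev L)) * C phi q M I (sort (rev L))"
        using C_sort[OF c mn pp dI setI, of "rev L"] L lenI by simp
      also have "eps p (rev L) = 0" using L by (simp add: eps_def)
      finally show "?g L = 0" by (simp add: calg_0[OF c])
    qed
  qed
  also have "\<dots> = (\<Sum>L\<in>?AL. \<Sum>R\<in>?S I. phi (eps q R) * (P M R (rev L) * P N L J))"
    unfolding C_def by (simp add: sum_distrib_right mult.assoc)
  also have "\<dots> = (\<Sum>R\<in>?S I. phi (eps q R) * (\<Sum>L\<in>?AL. P M R (rev L) * P N L J))"
    by (subst sum.swap) (simp add: sum_distrib_left)
  also have "\<dots> = (\<Sum>R\<in>?S I. if rev J = R then phi (eps q R) else 0)"
  proof (rule sum.cong[OF refl])
    fix R assume R: "R \<in> ?S I"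
    have fR: "length (rev R) = m" "set (rev R) \<subseteq> {1..n}" using S_facts[OF R] lenI setI by auto
    have invM: "\<And>r j. r \<in> {1..n} \<Longrightarrow> j \<in> {1..n} \<Longrightarrow> (\<Sum>x=1..n. M r x * N x j) = (if r = j then 1 else 0)"
      using inv unfolding is_inverse_def matmul_def by blast
    have "(\<Sum>L\<in>?AL. P M R (rev L) * P N L J) = (if rev R = J then 1 else 0)"
      using contract[OF invM fR(1) lenJ fR(2) setJ] by simp
    thus "phi (eps q R) * (\<Sum>L\<in>?AL. P M R (rev L) * P N L J) = (if rev J = R then phi (eps q R) else 0)"
      by auto
  qed
  also have "\<dots> = (if rev J \<in> ?S I then phi (eps q (rev J)) else 0)"
    by (rule sum.delta'[OF finite_S])
  also have "\<dots> = phi (eps q (rev J)) * (if I = sort J then 1 else 0)"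
  proof -
    have "rev J \<in> ?S I \<longleftrightarrow> I = sort J"
    proof
      assume "rev J \<in> ?S I"
      hence "mset J = mset I" by simp
      thus "I = sort J" using sort_eq_sorted[OF _ sI] by metis
    next
      assume "I = sort J"
      thus "rev J \<in> ?S I" by simp
    qed
    thus ?thesis by simp
  qed
  finally show ?thesis .
qed


lemma eps_nonzero:
  assumes pp: "param_matrix n p" and d: "distinct L" and sL: "set L \<subseteq> {1..n}"
  shows "eps p L \<noteq> 0"
proof -
  have "(\<Prod>(s,u)\<in>invs L. - p (L!s) (L!u)) \<noteq> 0"
  proof (subst prod_zero_iff[OF finite_invs], clarify)
    fix s u assume su: "(s,u) \<in> invs L" and z: "- p (L!s) (L!u) = 0"
    have u: "u < length L" and s: "s < length L" using su by (auto simp: invs_def)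
    have "L!s \<in> {1..n}" by (rule nth_in[OF sL s])
    moreover have "L!u \<in> {1..n}" by (rule nth_in[OF sL u])
    ultimately show False using pp z unfolding param_matrix_def by auto
  qed
  thus ?thesis using d by (simp add: eps_alt)
qed

theorem mainTheorem6:
  fixes phi :: "complex \<Rightarrow> 'a::ring_1"
    and n m :: nat
    and q p :: "nat \<Rightarrow> nat \<Rightarrow> complex"
    and M Minv :: "nat \<Rightarrow> nat \<Rightarrow> 'a"
    and I J :: "nat list"
  assumes "calg phi"
    and "param_matrix n q" and "param_matrix n p"
    and "manin phi n q p M"
    and "is_inverse n M Minv"
    and "1 \<le> m" and "m \<le> n"
    and "length I = m" and "sorted_wrt (<) I" and "set I \<subseteq> {1..n}"
    and "length J = m" and "distinct J" and "set J \<subseteq> {1..n}"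
  shows "((\<Sum>K\<in>{K. length K = m \<and> sorted_wrt (<) K \<and> set K \<subseteq> {1..n}}.
            phi (eps p (rev K)) * cdet phi q M I K
              * cdet phi (\<lambda>i j. inverse (p i j)) Minv K J)
         = phi (eps q (rev J)) * (if I = sort J then 1 else 0))
       \<and> (cdet phi q M [1..<n+1] [1..<n+1] * cdet phi (\<lambda>i j. inverse (p i j)) Minv [1..<n+1] [1..<n+1]
         = phi (inverse (eps p (rev [1..<n+1])) * eps q (rev [1..<n+1])))"
proof
  note c = assms(1)
  show "(\<Sum>K\<in>{K. length K = m \<and> sorted_wrt (<) K \<and> set K \<subseteq> {1..n}}.
            phi (eps p (rev K)) * cdet phi q M I K
              * cdet phi (\<lambda>i j. inverse (p i j)) Minv K J)
         = phi (eps q (rev J)) * (if I = sort J then 1 else 0)"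
    by (rule main1[OF assms(1-5,8-11,13)])
  let ?K0 = "[1..<n+1]"
  have K0s: "sorted_wrt (<) ?K0" by (simp only: strict_sorted_iff sorted_upt distinct_upt simp_thms)
  have K0set: "set ?K0 \<subseteq> {1..n}" by (simp only: set_upt) auto
  have K0l: "length ?K0 = n" by simp
  have KS: "{K. length K = n \<and> sorted_wrt (<) K \<and> set K \<subseteq> {1..n}} = {?K0}"
  proof (intro set_eqI iffI)
    fix K assume "K \<in> {K. length K = n \<and> sorted_wrt (<) K \<and> set K \<subseteq> {1..n}}"
    hence K: "length K = n" "sorted K" "distinct K" "set K \<subseteq> {1..n}" by (auto simp: strict_sorted_iff)
    have "card (set K) = n" using distinct_card[OF K(3)] K(1) by simp
    hence "set K = {1..n}" by (intro card_subset_eq[OF _ K(4)]) simp_all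
    moreover have "set ?K0 = {1..n}"
      by (simp only: set_upt Suc_eq_plus1[symmetric] atLeastLessThanSuc_atLeastAtMost)
    ultimately have "set K = set ?K0" by simp
    hence "K = ?K0" using sorted_distinct_set_unique[OF K(2,3) sorted_upt distinct_upt] by blast
    thus "K \<in> {?K0}" by simp
  next
    fix K assume "K \<in> {?K0}"
    hence K: "K = ?K0" by simp
    show "K \<in> {K. length K = n \<and> sorted_wrt (<) K \<and> set K \<subseteq> {1..n}}"
      unfolding K mem_Collect_eq using K0s K0set K0l by blast
  qed
  have m0: "(\<Sum>K\<in>{K. length K = n \<and> sorted_wrt (<) K \<and> set K \<subseteq> {1..n}}.
            phi (eps p (rev K)) * cdet phi q M ?K0 K
              * cdet phi (\<lambda>i j. inverse (p i j)) Minv K ?K0)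
         = phi (eps q (rev ?K0)) * (if ?K0 = sort ?K0 then 1 else 0)"
    by (rule main1[OF assms(1-5) K0l K0s K0set K0l K0set])
  have so: "sort ?K0 = ?K0" by (rule sorted_sort_id[OF sorted_upt])
  from m0 have e: "phi (eps p (rev ?K0)) * (cdet phi q M ?K0 ?K0 * cdet phi (\<lambda>i j. inverse (p i j)) Minv ?K0 ?K0)
      = phi (eps q (rev ?K0))"
    unfolding KS so by (simp add: mult.assoc)
  have nz: "eps p (rev ?K0) \<noteq> 0" by (rule eps_nonzero[OF assms(3)]) (use K0s K0set strict_sorted_iff in auto)
  have "cdet phi q M ?K0 ?K0 * cdet phi (\<lambda>i j. inverse (p i j)) Minv ?K0 ?K0
      = phi (inverse (eps p (rev ?K0)) * eps p (rev ?K0)) * (cdet phi q M ?K0 ?K0 * cdet phi (\<lambda>i j. inverse (p i j)) Minv ?K0 ?K0)"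
    using nz calg_1[OF c] by simp
  also have "\<dots> = phi (inverse (eps p (rev ?K0))) * phi (eps q (rev ?K0))"
    unfolding calg_mult[OF c] mult.assoc e ..
  also have "\<dots> = phi (inverse (eps p (rev ?K0)) * eps q (rev ?K0))"
    by (simp add: calg_mult[OF c])
  finally show "cdet phi q M ?K0 ?K0 * cdet phi (\<lambda>i j. inverse (p i j)) Minv ?K0 ?K0
         = phi (inverse (eps p (rev ?K0)) * eps q (rev ?K0))" .
qed


end
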